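(* Let $X$ be a reflexive (respectively separable) Banach space and let $V$ be a non-reflexive (respectively non-separable) Banach space continuously embedded in $X$. Then there exists no linear and closed operator $A:D(A)\subset X\to X$ such that $D(A)=V$ and $\|\cdot\|_V$ is equivalent to $\|A\cdot\|_X$ on $V$. *)

theory Defs
  imports "HOL-Analysis.Analysis"
begin

definition reflexive_space :: "'a::real_normed_vector itself \<Rightarrow> bool" where
  "reflexive_space _ \<longleftrightarrow>
     (\<forall>\<Phi> :: ('a \<Rightarrow>\<^sub>L real) \<Rightarrow>\<^sub>L real. \<exists>x::'a. \<forall>f. blinfun_apply \<Phi> f = blinfun_apply f x)"

definition closed_linear_operator :: "'a::real_normed_vector set \<Rightarrow> ('a \<Rightarrow> 'a) \<Rightarrow> bool" where
  "closed_linear_operator D A \<longleftrightarrow>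
     subspace D \<and>
     (\<forall>x\<in>D. \<forall>y\<in>D. A (x + y) = A x + A y) \<and>
     (\<forall>x\<in>D. \<forall>c::real. A (c *\<^sub>R x) = c *\<^sub>R A x) \<and>
     closed {(x, A x) | x. x \<in> D}"

end

theory Submission
  imports Defs
begin


lemma HB:
  fixes M :: "'a::real_normed_vector set" and f :: "'a \<Rightarrow> real"
  assumes M: "subspace M"
    and add: "\<And>x y. x\<in>M \<Longrightarrow> y\<in>M \<Longrightarrow> f (x+y) = f x + f y"
    and scl: "\<And>x c. x\<in>M \<Longrightarrow> f (c *\<^sub>R x) = c * f x"
    and bnd: "\<And>x. x\<in>M \<Longrightarrow> f x \<le> K * norm x" and K: "K \<ge> 0"
  shows "\<exists>g. bounded_linear g \<and> (\<forall>x\<in>M. g x = f x)"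
proof -
  define p where "p x = K * norm x" for x :: 'a
  have p_scale: "p (t *\<^sub>R z) = \<bar>t\<bar> * p z" for t z by (simp add: p_def)
  have p_tri: "p (x + y) \<le> p x + p y" for x y
    using norm_triangle_ineq[of x y] K unfolding p_def
    by (metis distrib_left mult_left_mono)
  define good where "good G \<longleftrightarrow> subspace G \<and> (\<forall>a. ((0::'a),a) \<in> G \<longrightarrow> a = 0) \<and>
      (\<forall>x a. (x,a)\<in>G \<longrightarrow> a \<le> p x) \<and> (\<forall>m\<in>M. (m, f m) \<in> G)" for G :: "('a \<times> real) set"
  define G0 where "G0 = (\<lambda>m. (m, f m)) ` M"
  have f0: "f 0 = 0" using scl[of 0 0] M subspace_0 by force
  have "good G0"
    unfolding good_def G0_def
  proof (intro conjI allI impI ballI)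
    show "subspace ((\<lambda>m. (m, f m)) ` M)"
      unfolding subspace_def using M add scl
    proof (intro conjI ballI allI)
      show "0 \<in> (\<lambda>m. (m, f m)) ` M" using subspace_0[OF M] f0
        by (auto simp: zero_prod_def image_iff intro!: bexI[of _ 0])
    next
      fix x y assume "x \<in> (\<lambda>m. (m, f m)) ` M" "y \<in> (\<lambda>m. (m, f m)) ` M"
      then show "x + y \<in> (\<lambda>m. (m, f m)) ` M"
        using add subspace_add[OF M] by (auto simp: image_iff)
    next
      fix c x assume "x \<in> (\<lambda>m. (m, f m)) ` M"
      then show "c *\<^sub>R x \<in> (\<lambda>m. (m, f m)) ` M"
        using scl subspace_scale[OF M] by (auto simp: image_iff)
    qed
  qed (auto simp: f0 bnd p_def)
  have "\<exists>Gm\<in>Collect good. \<forall>X\<in>Collect good. Gm \<subseteq> X \<longrightarrow> X = Gm"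
  proof (rule Zorn_Lemma2, intro ballI)
    fix C assume C: "C \<in> chains (Collect good)"
    show "\<exists>U\<in>Collect good. \<forall>X\<in>C. X \<subseteq> U"
    proof (cases "C = {}")
      case True then show ?thesis using \<open>good G0\<close> by blast
    next
      case False
      have Cg: "\<And>X. X \<in> C \<Longrightarrow> good X" using C by (auto simp: chains_def)
      have Cc: "\<And>X Y. X \<in> C \<Longrightarrow> Y \<in> C \<Longrightarrow> X \<subseteq> Y \<or> Y \<subseteq> X"
        using C by (auto simp: chains_def chain_subset_def)
      obtain X0 where X0: "X0 \<in> C" using False by blast
      have "good (\<Union>C)"
        unfolding good_def
      proof (intro conjI allI impI ballI)
        show "subspace (\<Union>C)"
          unfolding subspace_def
        proof (intro conjI ballI allI)
          show "0 \<in> \<Union>C" using X0 Cg[OF X0] unfolding good_def by (meson UnionI subspace_0)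
          fix x y assume "x \<in> \<Union>C" "y \<in> \<Union>C"
          then obtain X Y where "x \<in> X" "y \<in> Y" "X \<in> C" "Y \<in> C" by blast
          then show "x + y \<in> \<Union>C"
            using Cc[of X Y] Cg[of X] Cg[of Y] unfolding good_def
            by (meson UnionI subsetD subspace_add)
        next
          fix c x assume "x \<in> \<Union>C"
          then show "c *\<^sub>R x \<in> \<Union>C" using Cg unfolding good_def
            by (meson UnionE UnionI subspace_scale)
        qed
      qed (use X0 Cg in \<open>auto simp: good_def\<close>)
      then show ?thesis by blast
    qed
  qed
  then obtain G where G: "good G" and max: "\<And>H. good H \<Longrightarrow> G \<subseteq> H \<Longrightarrow> H = G" by blast
  have Gs: "subspace G" and G0z: "\<And>a. (0,a) \<in> G \<Longrightarrow> a = 0" and Gp: "\<And>x a. (x,a)\<in>G \<Longrightarrow> a \<le> p x"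
    and GM: "\<And>m. m\<in>M \<Longrightarrow> (m, f m) \<in> G" using G by (auto simp: good_def)
  have G00: "(0,0) \<in> G" using subspace_0[OF Gs] by (simp add: zero_prod_def)
  have Gfun: "a = b" if "(x,a)\<in>G" "(x,b)\<in>G" for x a b
  proof -
    have "(x,a) - (x,b) \<in> G" using subspace_diff[OF Gs] that by blast
    then show ?thesis using G0z[of "a - b"] by simp
  qed
  have Gscale: "(t *\<^sub>R x, t * a) \<in> G" if "(x,a)\<in>G" for t x a
    using subspace_scale[OF Gs that, of t] by simp
  have Gadd: "(x + y, a + b) \<in> G" if "(x,a)\<in>G" "(y,b)\<in>G" for x y a b
    using subspace_add[OF Gs that] by simp
  have dom: "\<exists>a. (x,a) \<in> G" for x
  proof (rule ccontr)
    assume nx: "\<nexists>a. (x, a) \<in> G"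
    define x0 where "x0 = x"
    have nx0: "(x0,a) \<notin> G" for a using nx x0_def by blast
    define S where "S = {a - p (y - x0) | y a. (y,a) \<in> G}"
    have upper: "s \<le> p (z + x0) - b" if "s \<in> S" "(z,b) \<in> G" for s z b
    proof -
      obtain y a where s: "s = a - p (y - x0)" and ya: "(y,a) \<in> G" using \<open>s \<in> S\<close> S_def by blast
      have "a + b \<le> p (y + z)" using Gp[OF Gadd[OF ya that(2)]] .
      also have "\<dots> \<le> p (y - x0) + p (z + x0)" using p_tri[of "y - x0" "z + x0"] by simp
      finally show ?thesis using s by linarith
    qed
    have Sne: "S \<noteq> {}" using G00 S_def by auto
    define c where "c = Sup S"
    have c_le: "c \<le> p (z + x0) - b" if "(z,b) \<in> G" for z b
      unfolding c_def using Sne upper[OF _ that] by (intro cSup_least) auto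
    have bddS: "bdd_above S" using upper G00 by (auto simp: bdd_above_def)
    have le_c: "a - p (y - x0) \<le> c" if "(y,a) \<in> G" for y a
      unfolding c_def using bddS that by (intro cSup_upper) (auto simp: S_def)
    define H where "H = {(y + t *\<^sub>R x0, a + t * c) | y a t. (y,a) \<in> G}"
    have "good H"
      unfolding good_def
    proof (intro conjI allI impI ballI)
      show "subspace H"
        unfolding subspace_def
      proof (intro conjI ballI allI)
        have "(0::'a\<times>real) = (0 + 0 *\<^sub>R x0, 0 + 0 * c)" by (simp add: zero_prod_def)
        then show "0 \<in> H" unfolding H_def using G00 by blast
        fix u v assume "u \<in> H" "v \<in> H"
        then obtain y1 a1 t1 y2 a2 t2 where u: "u = (y1 + t1 *\<^sub>R x0, a1 + t1 * c)" "(y1,a1)\<in>G"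
          and v: "v = (y2 + t2 *\<^sub>R x0, a2 + t2 * c)" "(y2,a2)\<in>G" unfolding H_def by blast
        have "u + v = ((y1 + y2) + (t1 + t2) *\<^sub>R x0, (a1 + a2) + (t1 + t2) * c)"
          using u v by (simp add: algebra_simps scaleR_add_left)
        then show "u + v \<in> H" unfolding H_def using Gadd[OF u(2) v(2)] by blast
      next
        fix r u assume "u \<in> H"
        then obtain y1 a1 t1 where u: "u = (y1 + t1 *\<^sub>R x0, a1 + t1 * c)" "(y1,a1)\<in>G"
          unfolding H_def by blast
        have "r *\<^sub>R u = (r *\<^sub>R y1 + (r * t1) *\<^sub>R x0, r * a1 + (r * t1) * c)"
          using u by (simp add: algebra_simps scaleR_add_right)
        then show "r *\<^sub>R u \<in> H" unfolding H_def using Gscale[OF u(2)] by blast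
      qed
    next
      fix a assume "(0, a) \<in> H"
      then obtain y b t where e: "0 = y + t *\<^sub>R x0" "a = b + t * c" "(y,b)\<in>G" unfolding H_def by blast
      show "a = 0"
      proof (cases "t = 0")
        case True then show ?thesis using e G0z by auto
      next
        case False
        have "y = - (t *\<^sub>R x0)" using e(1) by (simp add: eq_neg_iff_add_eq_0)
        then have eq: "(- (1/t)) *\<^sub>R y = x0" using False by simp
        show ?thesis using Gscale[OF e(3), of "- (1/t)", unfolded eq] nx0 by blast
      qed
    next
      fix z a assume "(z, a) \<in> H"
      then obtain y b t where e: "z = y + t *\<^sub>R x0" "a = b + t * c" "(y,b)\<in>G" unfolding H_def by blast
      show "a \<le> p z"
      proof (cases t "0::real" rule: linorder_cases)
        case equal then show ?thesis using e Gp by auto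
      next
        case greater
        have "c \<le> p ((1/t) *\<^sub>R y + x0) - (1/t) * b" using c_le[OF Gscale[OF e(3)]] .
        also have "(1/t) *\<^sub>R y + x0 = (1/t) *\<^sub>R z" using greater e(1) by (simp add: scaleR_add_right)
        also have "p ((1/t) *\<^sub>R z) = (1/t) * p z" using greater p_scale by simp
        finally have "c \<le> (p z - b) / t" by (simp add: diff_divide_distrib)
        then have "t * c \<le> p z - b" using greater by (simp add: pos_le_divide_eq mult.commute)
        then show ?thesis using e by linarith
      next
        case less
        define s where "s = - t"
        have s: "s > 0" using less s_def by simp
        have "(1/s) * b - p ((1/s) *\<^sub>R y - x0) \<le> c" using le_c[OF Gscale[OF e(3)]] .
        also have "(1/s) *\<^sub>R y - x0 = (1/s) *\<^sub>R z" using s e(1) s_def by (simp add: scaleR_add_right)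
        also have "p ((1/s) *\<^sub>R z) = (1/s) * p z" using s p_scale by simp
        finally have "(b - p z) / s \<le> c" by (simp add: diff_divide_distrib)
        then have "b - p z \<le> s * c" using s by (simp add: pos_divide_le_eq mult.commute)
        moreover have "s * c = - (t * c)" by (simp add: s_def)
        ultimately show ?thesis using e by linarith
      qed
    next
      fix m assume "m \<in> M"
      have "(m, f m) = (m + 0 *\<^sub>R x0, f m + 0 * c)" by simp
      then show "(m, f m) \<in> H" unfolding H_def using GM[OF \<open>m \<in> M\<close>] by blast
    qed
    moreover have "G \<subseteq> H"
    proof
      fix u assume "u \<in> G"
      moreover obtain y a where "u = (y,a)" by fastforce
      moreover have "(y,a) = (y + 0 *\<^sub>R x0, a + 0 * c)" by simp
      ultimately show "u \<in> H" unfolding H_def by blast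
    qed
    moreover have "(x0, c) \<in> H"
    proof -
      have "(x0, c) = (0 + 1 *\<^sub>R x0, 0 + 1 * c)" by simp
      then show ?thesis unfolding H_def using G00 by blast
    qed
    ultimately show False using max nx0 by blast
  qed
  define g where "g x = (THE a. (x,a) \<in> G)" for x
  have gG: "(x, g x) \<in> G" for x
  proof -
    obtain a where a: "(x,a) \<in> G" using dom[of x] by blast
    have "(THE a. (x,a) \<in> G) = a" using a Gfun by (intro the_equality) auto
    then show ?thesis unfolding g_def using a by simp
  qed
  have gadd: "g (x + y) = g x + g y" for x y using Gfun[OF gG Gadd[OF gG gG]] .
  have gscl: "g (r *\<^sub>R x) = r * g x" for r x using Gfun[OF gG Gscale[OF gG]] .
  have gb: "\<bar>g x\<bar> \<le> norm x * K" for x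
  proof -
    have "g x \<le> p x" using Gp[OF gG] .
    moreover have "g ((-1) *\<^sub>R x) \<le> p ((-1) *\<^sub>R x)" using Gp[OF gG] .
    ultimately show ?thesis using gscl[of "-1" x] p_scale[of "-1" x] by (simp add: p_def abs_le_iff mult.commute)
  qed
  have "bounded_linear g"
    by (rule bounded_linear_intro[where K=K]) (use gadd gscl gb in auto)
  moreover have "\<forall>m\<in>M. g m = f m" using Gfun[OF gG GM] by blast
  ultimately show ?thesis by blast
qed



lemma separation:
  fixes W :: "'a::real_normed_vector set"
  assumes W: "subspace W" "closed W" and y: "y \<notin> W"
  shows "\<exists>g. bounded_linear g \<and> (\<forall>w\<in>W. g w = 0) \<and> g y = (1::real)"
proof -
  have W0: "0 \<in> W" using subspace_0[OF W(1)] .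
  define d where "d = infdist y W"
  have dpos: "d > 0"
    using in_closed_iff_infdist_zero[OF W(2), of y] W0 y infdist_nonneg[of y W]
    unfolding d_def by force
  define M where "M = {w + t *\<^sub>R y | w t. w \<in> W}"
  have uniq: "t1 = t2" if "w1 \<in> W" "w2 \<in> W" "w1 + t1 *\<^sub>R y = w2 + t2 *\<^sub>R y" for w1 w2 t1 t2
  proof (rule ccontr)
    assume ne: "t1 \<noteq> t2"
    have "(t1 - t2) *\<^sub>R y = w2 - w1" using that(3) by (simp add: algebra_simps scaleR_diff_left)
    moreover have "y = (1 / (t1 - t2)) *\<^sub>R ((t1 - t2) *\<^sub>R y)" using ne by simp
    ultimately have "y = (1 / (t1 - t2)) *\<^sub>R (w2 - w1)" by simp
    moreover have "(1 / (t1 - t2)) *\<^sub>R (w2 - w1) \<in> W"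
      using W(1) that(1,2) by (intro subspace_scale subspace_diff) auto
    ultimately show False using y by simp
  qed
  define f where "f z = (THE t. \<exists>w\<in>W. z = w + t *\<^sub>R y)" for z
  have fval: "f (w + t *\<^sub>R y) = t" if "w \<in> W" for w t
    unfolding f_def
  proof (rule the_equality)
    show "\<exists>w'\<in>W. w + t *\<^sub>R y = w' + t *\<^sub>R y" using that by blast
  next
    fix t' assume "\<exists>w'\<in>W. w + t *\<^sub>R y = w' + t' *\<^sub>R y"
    then obtain w' where "w' \<in> W" "w + t *\<^sub>R y = w' + t' *\<^sub>R y" by blast
    then show "t' = t" using uniq[OF that] by metis
  qed
  have "subspace M"
    unfolding subspace_def M_def
  proof (intro conjI ballI allI)
    show "0 \<in> {w + t *\<^sub>R y |w t. w \<in> W}" using W0 by (auto intro!: exI[of _ 0])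
  next
    fix u v assume "u \<in> {w + t *\<^sub>R y |w t. w \<in> W}" "v \<in> {w + t *\<^sub>R y |w t. w \<in> W}"
    then obtain w1 t1 w2 t2 where "u = w1 + t1 *\<^sub>R y" "v = w2 + t2 *\<^sub>R y" "w1 \<in> W" "w2 \<in> W" by blast
    moreover have "w1 + t1 *\<^sub>R y + (w2 + t2 *\<^sub>R y) = (w1 + w2) + (t1 + t2) *\<^sub>R y"
      by (simp add: algebra_simps scaleR_add_left)
    ultimately show "u + v \<in> {w + t *\<^sub>R y |w t. w \<in> W}"
      using subspace_add[OF W(1)] by blast
  next
    fix r u assume "u \<in> {w + t *\<^sub>R y |w t. w \<in> W}"
    then obtain w1 t1 where "u = w1 + t1 *\<^sub>R y" "w1 \<in> W" by blast
    moreover have "r *\<^sub>R (w1 + t1 *\<^sub>R y) = r *\<^sub>R w1 + (r * t1) *\<^sub>R y"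
      by (simp add: scaleR_add_right)
    ultimately show "r *\<^sub>R u \<in> {w + t *\<^sub>R y |w t. w \<in> W}"
      using subspace_scale[OF W(1)] by blast
  qed
  moreover have "f (u + v) = f u + f v" if uvM: "u \<in> M" "v \<in> M" for u v
  proof -
    obtain w1 t1 w2 t2 where o: "u = w1 + t1 *\<^sub>R y" "v = w2 + t2 *\<^sub>R y" "w1 \<in> W" "w2 \<in> W"
      using uvM unfolding M_def by blast
    have e: "u + v = (w1 + w2) + (t1 + t2) *\<^sub>R y"
      using o by (simp add: algebra_simps scaleR_add_left)
    have "f (u + v) = t1 + t2" unfolding e by (rule fval) (rule subspace_add[OF W(1) o(3,4)])
    moreover have "f u = t1" unfolding o(1) by (rule fval[OF o(3)])
    moreover have "f v = t2" unfolding o(2) by (rule fval[OF o(4)])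
    ultimately show ?thesis by simp
  qed
  moreover have "f (r *\<^sub>R u) = r * f u" if uM: "u \<in> M" for r u
  proof -
    obtain w1 t1 where o: "u = w1 + t1 *\<^sub>R y" "w1 \<in> W"
      using uM unfolding M_def by blast
    have e: "r *\<^sub>R u = r *\<^sub>R w1 + (r * t1) *\<^sub>R y"
      using o by (simp add: scaleR_add_right)
    have "f (r *\<^sub>R u) = r * t1" unfolding e by (rule fval) (rule subspace_scale[OF W(1) o(2)])
    moreover have "f u = t1" unfolding o(1) by (rule fval[OF o(2)])
    ultimately show ?thesis by simp
  qed
  moreover have "f u \<le> (1/d) * norm u" if uM: "u \<in> M" for u
  proof -
    obtain w t where u: "u = w + t *\<^sub>R y" "w \<in> W"
      using uM unfolding M_def by blast
    have fu: "f u = t" using u fval by simp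
    show ?thesis
    proof (cases "t > 0")
      case False
      have "0 \<le> (1/d) * norm u" using dpos by simp
      then show ?thesis using fu False by linarith
    next
      case True
      have mem: "(- (1/t)) *\<^sub>R w \<in> W" using subspace_scale[OF W(1) u(2)] .
      have "d \<le> dist y ((- (1/t)) *\<^sub>R w)" unfolding d_def by (rule infdist_le[OF mem])
      also have "dist y ((- (1/t)) *\<^sub>R w) = norm ((1/t) *\<^sub>R u)"
        using True u(1) by (simp add: dist_norm scaleR_add_right algebra_simps)
      also have "\<dots> = norm u / t" using True by simp
      finally have "d * t \<le> norm u" using True by (simp add: pos_le_divide_eq)
      then show ?thesis using fu dpos by (simp add: pos_le_divide_eq mult.commute)
    qed
  qed
  ultimately obtain g where g: "bounded_linear g" "\<forall>x\<in>M. g x = f x"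
    using HB[of M f "1/d"] dpos by auto
  have "g w = 0" if wW: "w \<in> W" for w
  proof -
    have "w = w + 0 *\<^sub>R y" by simp
    then have "w \<in> M" unfolding M_def using wW by blast
    then show ?thesis using g(2) fval[OF wW, of 0] by simp
  qed
  moreover have "g y = 1"
  proof -
    have "y = 0 + 1 *\<^sub>R y" by simp
    then have "y \<in> M" unfolding M_def using W0 by blast
    then show ?thesis using g(2) fval[OF W0, of 1] by simp
  qed
  ultimately show ?thesis using g(1) by (intro exI[of _ g]) auto
qed



lemma bounded_below_closed_range:
  fixes T :: "'v::banach \<Rightarrow> 'x::real_normed_vector"
  assumes T: "bounded_linear T" and c: "c > 0" and lb: "\<And>v. c * norm v \<le> norm (T v)"
  shows "closed (range T)"
  unfolding closed_sequential_limits
proof (intro allI impI)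
  fix s l assume "(\<forall>n. s n \<in> range T) \<and> s \<longlonglongrightarrow> l"
  then have sT: "\<And>n. s n \<in> range T" and lim: "s \<longlonglongrightarrow> l" by auto
  define v where "v n = inv T (s n)" for n
  have Tinj: "inj T"
  proof (rule injI)
    fix a b assume "T a = T b"
    then have "T (a - b) = 0" using linear_diff[OF bounded_linear.linear[OF T]] by simp
    then have "c * norm (a - b) \<le> 0" using lb[of "a - b"] by simp
    then show "a = b" using c by (simp add: mult_le_0_iff)
  qed
  have Tv: "T (v n) = s n" for n using sT[of n] unfolding v_def by (auto simp: f_inv_into_f)
  have "Cauchy s" using lim by (rule LIMSEQ_imp_Cauchy)
  have "Cauchy v"
    unfolding Cauchy_def
  proof (intro allI impI)
    fix e :: real assume e: "e > 0"
    then obtain N where N: "\<And>m n. m \<ge> N \<Longrightarrow> n \<ge> N \<Longrightarrow> dist (s m) (s n) < c * e"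
      using \<open>Cauchy s\<close> c unfolding Cauchy_def by (meson mult_pos_pos)
    show "\<exists>M. \<forall>m\<ge>M. \<forall>n\<ge>M. dist (v m) (v n) < e"
    proof (intro exI allI impI)
      fix m n assume "m \<ge> N" "n \<ge> N"
      have "c * dist (v m) (v n) \<le> norm (T (v m - v n))" using lb by (simp add: dist_norm)
      also have "\<dots> = dist (s m) (s n)"
        using linear_diff[OF bounded_linear.linear[OF T]] Tv by (simp add: dist_norm)
      also have "\<dots> < c * e" using N \<open>m \<ge> N\<close> \<open>n \<ge> N\<close> by blast
      finally show "dist (v m) (v n) < e" using c by simp
    qed
  qed
  then obtain x where "v \<longlonglongrightarrow> x" using Cauchy_convergent_iff convergent_def by blast
  then have "(\<lambda>n. T (v n)) \<longlonglongrightarrow> T x"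
    using bounded_linear.tendsto[OF T] by blast
  then have "s \<longlonglongrightarrow> T x" using Tv by simp
  then have "l = T x" using lim LIMSEQ_unique by blast
  then show "l \<in> range T" by simp
qed

lemma sep_transfer:
  fixes T :: "'v::real_normed_vector \<Rightarrow> 'x::real_normed_vector"
  assumes T: "bounded_linear T" and c: "c > 0" and lb: "\<And>v. c * norm v \<le> norm (T v)"
    and sx: "separable_space (euclidean :: 'x topology)"
  shows "separable_space (euclidean :: 'v topology)"
proof -
  obtain D :: "'x set" where D: "countable D" "closure D = UNIV"
    using sx unfolding separable_space_def by auto
  define pick where "pick = (\<lambda>(d, n::nat). SOME v. dist (T v) d < 1 / real (Suc n))"
  define E where "E = pick ` (D \<times> UNIV)"
  have "countable E" unfolding E_def using D(1) by auto
  moreover have "closure E = UNIV"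
  proof -
    have "v0 \<in> closure E" for v0
      unfolding closure_approachable
    proof (intro allI impI)
      fix e :: real assume e: "e > 0"
      obtain n where n: "inverse (real (Suc n)) < c * e / 2"
        using reals_Archimedean[of "c * e / 2"] c e by auto
      define r where "r = 1 / real (Suc n)"
      have r: "r > 0" "r < c * e / 2" using n by (auto simp: r_def field_simps)
      have "T v0 \<in> closure D" using D(2) by simp
      then obtain d where d: "d \<in> D" "dist d (T v0) < r"
        using r(1) unfolding closure_approachable by blast
      have ex: "\<exists>v. dist (T v) d < r" using d(2) by (auto simp: dist_commute)
      define w where "w = pick (d, n)"
      have w: "dist (T w) d < r" unfolding w_def pick_def r_def
        using someI_ex[OF ex[unfolded r_def]] by simp
      have "w \<in> E" unfolding E_def w_def using d(1) by auto
      have "c * dist w v0 \<le> norm (T (w - v0))" using lb by (simp add: dist_norm)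
      also have "\<dots> = dist (T w) (T v0)"
        using linear_diff[OF bounded_linear.linear[OF T]] by (simp add: dist_norm)
      also have "\<dots> \<le> dist (T w) d + dist d (T v0)" by (rule dist_triangle)
      also have "\<dots> < c * e" using w d(2) r by linarith
      finally show "\<exists>y\<in>E. dist y v0 < e" using \<open>w \<in> E\<close> c by auto
    qed
    then show ?thesis by auto
  qed
  ultimately show ?thesis unfolding separable_space_def by auto
qed

lemma refl_transfer:
  fixes T :: "'v::banach \<Rightarrow> 'x::real_normed_vector"
  assumes T: "bounded_linear T" and c: "c > 0" and lb: "\<And>v. c * norm v \<le> norm (T v)"
    and rx: "reflexive_space TYPE('x)"
  shows "reflexive_space TYPE('v)"
  unfolding reflexive_space_def
proof
  fix \<Phi> :: "('v \<Rightarrow>\<^sub>L real) \<Rightarrow>\<^sub>L real"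
  have lin: "linear T" using T bounded_linear.linear by blast
  have Tinj: "inj T"
  proof (rule injI)
    fix a b assume "T a = T b"
    then have "T (a - b) = 0" using linear_diff[OF lin] by simp
    then have "c * norm (a - b) \<le> 0" using lb[of "a - b"] by simp
    then show "a = b" using c by (simp add: mult_le_0_iff)
  qed
  define Tb where "Tb = Blinfun T"
  have Tb: "blinfun_apply Tb = T" unfolding Tb_def using T by (rule bounded_linear_Blinfun_apply)
  have bl: "bounded_linear (\<lambda>g::'x \<Rightarrow>\<^sub>L real. blinfun_apply \<Phi> (g o\<^sub>L Tb))"
    by (rule bounded_linear_compose[OF blinfun.bounded_linear_right
          bounded_bilinear.bounded_linear_left[OF bounded_bilinear_blinfun_compose]])
  define \<Psi> where "\<Psi> = Blinfun (\<lambda>g::'x \<Rightarrow>\<^sub>L real. blinfun_apply \<Phi> (g o\<^sub>L Tb))"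
  have \<Psi>: "blinfun_apply \<Psi> g = blinfun_apply \<Phi> (g o\<^sub>L Tb)" for g
    unfolding \<Psi>_def using bl by (simp add: bounded_linear_Blinfun_apply)
  obtain y :: 'x where y: "\<And>g. blinfun_apply \<Psi> g = blinfun_apply g y"
    using rx unfolding reflexive_space_def by blast
  have sub: "subspace (range T)" using linear_subspace_image[OF lin subspace_UNIV] .
  have cl: "closed (range T)" by (rule bounded_below_closed_range[OF T c lb])
  have "y \<in> range T"
  proof (rule ccontr)
    assume "y \<notin> range T"
    then obtain g0 where g0: "bounded_linear g0" "\<forall>w\<in>range T. g0 w = 0" "g0 y = (1::real)"
      using separation[OF sub cl] by blast
    have "Blinfun g0 o\<^sub>L Tb = 0"
      by (rule blinfun_eqI) (use g0 Tb in \<open>simp add: bounded_linear_Blinfun_apply\<close>)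
    then have "blinfun_apply (Blinfun g0) y = 0" using y[of "Blinfun g0"] \<Psi> by simp
    then show False using g0 by (simp add: bounded_linear_Blinfun_apply)
  qed
  then obtain x where x: "y = T x" by blast
  show "\<exists>x. \<forall>f. blinfun_apply \<Phi> f = blinfun_apply f x"
  proof (intro exI allI)
    fix f :: "'v \<Rightarrow>\<^sub>L real"
    define fM where "fM w = blinfun_apply f (inv T w)" for w
    have invT: "inv T (T v) = v" for v using Tinj by simp
    have "\<exists>g. bounded_linear g \<and> (\<forall>w\<in>range T. g w = fM w)"
    proof (rule HB[OF sub, where K = "norm f / c"])
      fix u w assume "u \<in> range T" "w \<in> range T"
      then obtain a b where "u = T a" "w = T b" by blast
      then show "fM (u + w) = fM u + fM w"
        unfolding fM_def using linear_add[OF lin] invT by (metis blinfun.add_right)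
    next
      fix u r assume "u \<in> range T"
      then obtain a where "u = T a" by blast
      then show "fM (r *\<^sub>R u) = r * fM u"
        unfolding fM_def using linear_scale[OF lin] invT by (metis blinfun.scaleR_right real_scaleR_def)
    next
      fix u assume "u \<in> range T"
      then obtain a where a: "u = T a" by blast
      have "fM u = blinfun_apply f a" unfolding fM_def a invT ..
      also have "\<dots> \<le> norm f * norm a" using norm_blinfun[of f a] by simp
      also have "\<dots> \<le> norm f * (norm u / c)"
        using lb[of a] c a by (intro mult_left_mono) (auto simp: pos_le_divide_eq mult.commute)
      finally show "fM u \<le> norm f / c * norm u" by simp
    next
      show "norm f / c \<ge> 0" using c by simp
    qed
    then obtain g where g: "bounded_linear g" "\<And>w. w \<in> range T \<Longrightarrow> g w = fM w" by blast
    have gf: "Blinfun g o\<^sub>L Tb = f"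
      by (rule blinfun_eqI) (use g Tb invT in \<open>simp add: bounded_linear_Blinfun_apply fM_def\<close>)
    have "blinfun_apply \<Phi> f = blinfun_apply \<Psi> (Blinfun g)" using \<Psi> gf by simp
    also have "\<dots> = g (T x)" using y x g(1) by (simp add: bounded_linear_Blinfun_apply)
    also have "\<dots> = blinfun_apply f x" using g(2)[of "T x"] invT by (simp add: fM_def)
    finally show "blinfun_apply \<Phi> f = blinfun_apply f x" .
  qed
qed


theorem lemma6:
  fixes j :: "'v::banach \<Rightarrow> 'x::banach"
  assumes emb: "bounded_linear j" "inj j"
    and cases: "(reflexive_space TYPE('x) \<and> \<not> reflexive_space TYPE('v)) \<or>
                (separable_space (euclidean :: 'x topology) \<and>
                 \<not> separable_space (euclidean :: 'v topology))"
  shows "\<not> (\<exists>A :: 'x \<Rightarrow> 'x. closed_linear_operator (range j) A \<and>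
             (\<exists>c>0. \<exists>C>0. \<forall>v. c * norm v \<le> norm (A (j v)) \<and> norm (A (j v)) \<le> C * norm v))"
proof
  assume "\<exists>A :: 'x \<Rightarrow> 'x. closed_linear_operator (range j) A \<and>
             (\<exists>c>0. \<exists>C>0. \<forall>v. c * norm v \<le> norm (A (j v)) \<and> norm (A (j v)) \<le> C * norm v)"
  then obtain A :: "'x \<Rightarrow> 'x" and c C where A: "closed_linear_operator (range j) A"
    and c: "c > 0" and C: "C > 0" and bnds: "\<And>v. c * norm v \<le> norm (A (j v))"
    "\<And>v. norm (A (j v)) \<le> C * norm v" by blast
  have Aadd: "A (x + y) = A x + A y" if "x \<in> range j" "y \<in> range j" for x y
    using A that unfolding closed_linear_operator_def by blast
  have Ascl: "A (r *\<^sub>R x) = r *\<^sub>R A x" if "x \<in> range j" for r x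
    using A that unfolding closed_linear_operator_def by blast
  define T where "T v = A (j v)" for v
  have "bounded_linear T"
  proof (rule bounded_linear_intro[where K = C])
    fix x y show "T (x + y) = T x + T y"
      unfolding T_def using Aadd linear_add[OF bounded_linear.linear[OF emb(1)]] by simp
  next
    fix r x show "T (r *\<^sub>R x) = r *\<^sub>R T x"
      unfolding T_def using Ascl linear_scale[OF bounded_linear.linear[OF emb(1)]] by simp
  next
    fix x show "norm (T x) \<le> norm x * C" unfolding T_def using bnds(2)[of x] by (simp add: mult.commute)
  qed
  moreover have lb: "\<And>v. c * norm v \<le> norm (T v)" unfolding T_def by (rule bnds(1))
  ultimately show False
    using cases sep_transfer[of T c] refl_transfer[of T c] c by blast
qed

end
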